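(* Fix $\alpha>1$ and parameters $\varepsilon_0,\delta_0,r,\varepsilon_1,\delta_1,\Delta^{\mathrm{disc}},\Delta>0$, and let $\phi_r$ be the weighted partition selection primitive defined from them. Let $X, X' \in \mathbb{R}_{\ge0}^U$ differ in at most one coordinate $u$, with $|X_u - X'_u| \le \Delta_\infty \le \Delta$. Then, provided $\delta_0+\delta_1\Delta_\infty^r<1$, $$\max\left\{D^{\delta}_\alpha(M_{\phi_r}(X)\|M_{\phi_r}(X')),\ D^{\delta}_\alpha(M_{\phi_r}(X')\|M_{\phi_r}(X))\right\}\le \varepsilon,$$ where $\delta = \delta_0+\delta_1\Delta_\infty^r$ and $\varepsilon = \varepsilon_0+\varepsilon_1\Delta_\infty^r$. In other words, for $\Delta_0 = 1$ and $\Delta_\infty\le\Delta$, $\phi_r$ satisfies $(\delta_0+\delta_1\Delta_\infty^r,\alpha,\varepsilon_0+\varepsilon_1\Delta_\infty^r)$-RDP.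
   Context: $\mathrm{Ber}(p)$: Bernoulli distribution. For $\alpha>1$, $D_\alpha(P\|Q)=\frac{1}{\alpha-1}\log\sum_x P(x)^\alpha Q(x)^{1-\alpha}$ and $D^\delta_\alpha(P\|Q)=\inf\{D_\alpha(P'\|Q'): P=(1-\delta)P'+\delta P'',\ Q=(1-\delta)Q'+\delta Q''\}$ over probability distributions. Define $L(q,\varepsilon,\delta) = \max\{p\in[q,1] : D^\delta_\alpha(\mathrm{Ber}(p)\|\mathrm{Ber}(q))\le\varepsilon \text{ and } D^\delta_\alpha(\mathrm{Ber}(q)\|\mathrm{Ber}(p))\le\varepsilon\}$. Let $N_{\mathrm{disc}} = \lceil \Delta/\Delta^{\mathrm{disc}}\rceil$. The discretized primitive $\psi_r:\mathbb{Z}_{\ge0}\to[0,1]$ is $\psi_r(0)=0$ and, for $n>0$, $$\psi_r(n) = \min_{i\in\{1,\dots,\min\{n,N_{\mathrm{disc}}\}\}} L\!\left(\psi_r(n-i),\ \varepsilon_0+\varepsilon_1(\Delta^{\mathrm{disc}}(i-1))^r,\ \delta_0+\delta_1(\Delta^{\mathrm{disc}}(i-1))^r\right).$$ The weighted primitive is $\phi_r(y) = \psi_r(\lfloor y/\Delta^{\mathrm{disc}}\rfloor)$ for $y\ge0$. For a weighted dataset $X\in\mathbb{R}_{\ge0}^U$, the mechanism $M_{\phi_r}(X)$ outputs the random subset of $U$ containing each $u$ independently with probability $\phi_r(X_u)$. $(\delta,\alpha,\varepsilon)$-RDP means $D^\delta_\alpha(M(X)\|M(X'))\le\varepsilon$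 for all neighboring pairs in both orders. *)

theory Defs
  imports "HOL-Probability.Probability"
begin

definition renyi_div :: "real \<Rightarrow> 'a pmf \<Rightarrow> 'a pmf \<Rightarrow> ereal" where
  "renyi_div \<alpha> P Q =
     (if (\<exists>x. pmf P x > 0 \<and> pmf Q x = 0) then \<infinity>
      else (let S = (\<integral>\<^sup>+ x. ennreal (pmf P x powr \<alpha> * pmf Q x powr (1 - \<alpha>)) \<partial>count_space UNIV)
            in if S = \<infinity> then \<infinity> else ereal (ln (enn2real S) / (\<alpha> - 1))))"

definition approx_renyi :: "real \<Rightarrow> real \<Rightarrow> 'a pmf \<Rightarrow> 'a pmf \<Rightarrow> ereal" where
  "approx_renyi \<delta> \<alpha> P Q =
     (INF t \<in> {(P', P'', Q', Q'').
                (\<forall>x. pmf P x = (1 - \<delta>) * pmf P' x + \<delta> * pmf P'' x) \<and>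
                (\<forall>x. pmf Q x = (1 - \<delta>) * pmf Q' x + \<delta> * pmf Q'' x)}.
        (case t of (P', P'', Q', Q'') \<Rightarrow> renyi_div \<alpha> P' Q'))"

definition L_fun :: "real \<Rightarrow> real \<Rightarrow> real \<Rightarrow> real \<Rightarrow> real" where
  "L_fun \<alpha> q \<epsilon> \<delta> =
     (GREATEST p. p \<in> {q..1} \<and>
        approx_renyi \<delta> \<alpha> (bernoulli_pmf p) (bernoulli_pmf q) \<le> ereal \<epsilon> \<and>
        approx_renyi \<delta> \<alpha> (bernoulli_pmf q) (bernoulli_pmf p) \<le> ereal \<epsilon>)"

definition N_disc :: "real \<Rightarrow> real \<Rightarrow> nat" where
  "N_disc \<Delta>d \<Delta> = nat \<lceil>\<Delta> / \<Delta>d\<rceil>"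

declare image_cong [fundef_cong]

function psi_r :: "real \<Rightarrow> real \<Rightarrow> real \<Rightarrow> real \<Rightarrow> real \<Rightarrow> real \<Rightarrow> real \<Rightarrow> real \<Rightarrow> nat \<Rightarrow> real" where
  "psi_r \<alpha> \<epsilon>0 \<delta>0 \<epsilon>1 \<delta>1 r \<Delta>d \<Delta> n =
     (if n = 0 then 0
      else Min ((\<lambda>i. L_fun \<alpha> (psi_r \<alpha> \<epsilon>0 \<delta>0 \<epsilon>1 \<delta>1 r \<Delta>d \<Delta> (n - i))
                       (\<epsilon>0 + \<epsilon>1 * (\<Delta>d * real (i - 1)) powr r)
                       (\<delta>0 + \<delta>1 * (\<Delta>d * real (i - 1)) powr r))
                ` {1..min n (N_disc \<Delta>d \<Delta>)}))"
  by pat_completeness auto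
termination
  by (relation "Wellfounded.measure (\<lambda>(_, _, _, _, _, _, _, _, n). n)") auto

declare image_cong [fundef_cong del]

definition phi_r :: "real \<Rightarrow> real \<Rightarrow> real \<Rightarrow> real \<Rightarrow> real \<Rightarrow> real \<Rightarrow> real \<Rightarrow> real \<Rightarrow> real \<Rightarrow> real" where
  "phi_r \<alpha> \<epsilon>0 \<delta>0 \<epsilon>1 \<delta>1 r \<Delta>d \<Delta> y = psi_r \<alpha> \<epsilon>0 \<delta>0 \<epsilon>1 \<delta>1 r \<Delta>d \<Delta> (nat \<lfloor>y / \<Delta>d\<rfloor>)"

definition mech :: "(real \<Rightarrow> real) \<Rightarrow> ('u::finite \<Rightarrow> real) \<Rightarrow> 'u set pmf" where
  "mech \<phi> X = map_pmf (\<lambda>f. {u. f u}) (Pi_pmf UNIV False (\<lambda>u. bernoulli_pmf (\<phi> (X u))))"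

end

theory Submission
  imports Defs
begin


lemma powr_1m: "0 < (y::real) \<Longrightarrow> y powr (1 - a) = 1 / y powr (a - 1)"
  using powr_add[of y "1-a" "a-1"] by (simp add: field_simps)
lemma powr_ratio: "0 < (t::real) \<Longrightarrow> 0 < y \<Longrightarrow> t powr (a - 1) * y powr (1 - a) = (t / y) powr (a - 1)"
  by (simp add: powr_1m powr_divide)
lemma powr_ratio2: "0 \<le> (t::real) \<Longrightarrow> 0 < y \<Longrightarrow> t powr a * y powr (- a) = (t / y) powr a"
  by (simp add: powr_minus_divide powr_divide)

definition hB :: "real \<Rightarrow> real \<Rightarrow> real \<Rightarrow> real" where
  "hB \<alpha> x y = x powr \<alpha> * y powr (1 - \<alpha>) + (1 - x) powr \<alpha> * (1 - y) powr (1 - \<alpha>)"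

lemma hB_mono1:
  assumes a: "\<alpha> > 1" and "0 < y" "y < 1" "y \<le> x" "x \<le> x'" "x' \<le> 1"
  shows "hB \<alpha> x y \<le> hB \<alpha> x' y"
proof -
  define c1 where "c1 = y powr (1 - \<alpha>)"
  define c2 where "c2 = (1 - y) powr (1 - \<alpha>)"
  let ?f = "\<lambda>t. t powr \<alpha> * c1 + (1 - t) powr \<alpha> * c2"
  have "?f x \<le> ?f x'"
  proof (rule DERIV_nonneg_imp_increasing_open[OF \<open>x \<le> x'\<close>])
    fix t assume t: "x < t" "t < x'"
    have t0: "0 < t" "0 < 1 - t" using t assms by auto
    have D: "DERIV ?f t :> (\<alpha> * t powr (\<alpha> - 1)) * c1 + (\<alpha> * (1 - t) powr (\<alpha> - 1) * (-1)) * c2"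
      using t0 by (auto intro!: derivative_eq_intros has_real_derivative_powr)
    have e1: "t powr (\<alpha> - 1) * c1 = (t / y) powr (\<alpha> - 1)"
      unfolding c1_def using t0 \<open>0<y\<close> by (intro powr_ratio) auto
    have e2: "(1 - t) powr (\<alpha> - 1) * c2 = ((1 - t) / (1 - y)) powr (\<alpha> - 1)"
      unfolding c2_def using t0 \<open>y<1\<close> by (intro powr_ratio) auto
    have "(t / y) powr (\<alpha> - 1) \<ge> 1"
      using t assms by (intro ge_one_powr_ge_zero) (auto simp: field_simps)
    moreover have "((1 - t) / (1 - y)) powr (\<alpha> - 1) \<le> 1"
      using t assms t0 by (intro powr_le1) (auto simp: field_simps)
    ultimately have "t powr (\<alpha> - 1) * c1 - (1 - t) powr (\<alpha> - 1) * c2 \<ge> 0"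
      using e1 e2 by linarith
    then have "\<alpha> * (t powr (\<alpha> - 1) * c1 - (1 - t) powr (\<alpha> - 1) * c2) \<ge> 0"
      using a by simp
    then have "(\<alpha> * t powr (\<alpha> - 1)) * c1 + (\<alpha> * (1 - t) powr (\<alpha> - 1) * (-1)) * c2 \<ge> 0"
      by (simp add: algebra_simps)
    then show "\<exists>y. DERIV ?f t :> y \<and> y \<ge> 0" using D by blast
  next
    show "continuous_on {x..x'} ?f"
      using assms by (intro continuous_intros continuous_on_powr') auto
  qed
  then show ?thesis unfolding hB_def c1_def c2_def by simp
qed

lemma hB_mono2:
  assumes a: "\<alpha> > 1" and "0 < y'" "y' \<le> y" "y < 1" "y \<le> x" "x \<le> 1"
  shows "hB \<alpha> x y \<le> hB \<alpha> x y'"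
proof -
  define A where "A = x powr \<alpha>"
  define B where "B = (1 - x) powr \<alpha>"
  let ?g = "\<lambda>s. A * s powr (1 - \<alpha>) + B * (1 - s) powr (1 - \<alpha>)"
  have "?g y \<le> ?g y'"
  proof (rule DERIV_nonpos_imp_decreasing_open[OF \<open>y' \<le> y\<close>])
    fix s assume s: "y' < s" "s < y"
    have s0: "0 < s" "0 < 1 - s" using s assms by auto
    have D: "DERIV ?g s :> A * ((1 - \<alpha>) * s powr (1 - \<alpha> - 1)) + B * ((1 - \<alpha>) * (1 - s) powr (1 - \<alpha> - 1) * (-1))"
      using s0 by (auto intro!: derivative_eq_intros has_real_derivative_powr)
    have e1: "A * s powr (1 - \<alpha> - 1) = (x / s) powr \<alpha>"
      unfolding A_def using s0 assms by (simp add: powr_ratio2 flip: powr_ratio2)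
    have e2: "B * (1 - s) powr (1 - \<alpha> - 1) = ((1 - x) / (1 - s)) powr \<alpha>"
      unfolding B_def using s0 assms by (simp add: powr_ratio2 flip: powr_ratio2)
    have "(x / s) powr \<alpha> \<ge> 1"
      using s assms by (intro ge_one_powr_ge_zero) (auto simp: field_simps)
    moreover have "((1 - x) / (1 - s)) powr \<alpha> \<le> 1"
      using s assms s0 by (intro powr_le1) (auto simp: field_simps)
    ultimately have "A * s powr (1 - \<alpha> - 1) - B * (1 - s) powr (1 - \<alpha> - 1) \<ge> 0"
      using e1 e2 by linarith
    then have "(1 - \<alpha>) * (A * s powr (1 - \<alpha> - 1) - B * (1 - s) powr (1 - \<alpha> - 1)) \<le> 0"
      using a by (simp add: mult_nonpos_nonneg)
    then have "A * ((1 - \<alpha>) * s powr (1 - \<alpha> - 1)) + B * ((1 - \<alpha>) * (1 - s) powr (1 - \<alpha> - 1) * (-1)) \<le> 0"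
      by (simp add: algebra_simps)
    then show "\<exists>y. DERIV ?g s :> y \<and> y \<le> 0" using D by blast
  next
    show "continuous_on {y'..y} ?g"
      using assms by (intro continuous_intros) auto
  qed
  then show ?thesis unfolding hB_def A_def B_def by (simp add: mult.commute)
qed


lemma renyi_finite:
  fixes P Q :: "'a::finite pmf"
  shows "renyi_div \<alpha> P Q = (if (\<exists>x. pmf P x > 0 \<and> pmf Q x = 0) then \<infinity>
     else ereal (ln (\<Sum>x\<in>UNIV. pmf P x powr \<alpha> * pmf Q x powr (1 - \<alpha>)) / (\<alpha> - 1)))"
proof -
  have "(\<integral>\<^sup>+ x. ennreal (pmf P x powr \<alpha> * pmf Q x powr (1 - \<alpha>)) \<partial>count_space UNIV)
     = ennreal (\<Sum>x\<in>UNIV. pmf P x powr \<alpha> * pmf Q x powr (1 - \<alpha>))"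
    by (simp add: nn_integral_count_space_finite sum_ennreal)
  then show ?thesis unfolding renyi_div_def Let_def by (simp add: sum_nonneg)
qed

lemma renyi_self:
  fixes P :: "'a::finite pmf"
  shows "renyi_div \<alpha> P P = 0"
proof -
  have "(\<Sum>x\<in>UNIV. pmf P x powr \<alpha> * pmf P x powr (1 - \<alpha>)) = (\<Sum>x\<in>UNIV. pmf P x)"
  proof (rule sum.cong[OF refl])
    fix x
    show "pmf P x powr \<alpha> * pmf P x powr (1 - \<alpha>) = pmf P x"
    proof (cases "pmf P x = 0")
      case False
      then have "pmf P x > 0" using pmf_nonneg[of P x] by linarith
      then show ?thesis by (simp add: powr_add[symmetric])
    qed simp
  qed
  also have "\<dots> = 1" by (rule sum_pmf_eq_1) auto
  finally show ?thesis by (simp add: renyi_finite)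
qed

lemma bool_pmf:
  fixes P :: "bool pmf"
  shows "pmf P False = 1 - pmf P True" "0 \<le> pmf P True" "pmf P True \<le> 1"
    "P = bernoulli_pmf (pmf P True)"
proof -
  have "(\<Sum>x\<in>UNIV. pmf P x) = 1" by (rule sum_pmf_eq_1) auto
  then show F: "pmf P False = 1 - pmf P True" by (simp add: UNIV_bool)
  show "0 \<le> pmf P True" "pmf P True \<le> 1" by (auto simp: pmf_le_1)
  then show "P = bernoulli_pmf (pmf P True)"
    by (intro pmf_eqI) (case_tac i, auto simp: F)
qed

definition hB' where "hB' = hB"

definition DB :: "real \<Rightarrow> real \<Rightarrow> real \<Rightarrow> ereal" where
  "DB \<alpha> x y = renyi_div \<alpha> (bernoulli_pmf x) (bernoulli_pmf y)"

lemma DB_formula: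
  assumes "0 \<le> x" "x \<le> 1" "0 \<le> y" "y \<le> 1"
  shows "DB \<alpha> x y = (if (x > 0 \<and> y = 0) \<or> (x < 1 \<and> y = 1) then \<infinity>
      else ereal (ln (hB \<alpha> x y) / (\<alpha> - 1)))"
  using assms unfolding DB_def renyi_finite hB_def
  by (simp add: UNIV_bool ex_bool_eq add.commute)

lemma DB_sym:
  assumes "0 \<le> x" "x \<le> 1" "0 \<le> y" "y \<le> 1"
  shows "DB \<alpha> x y = DB \<alpha> (1 - x) (1 - y)"
  using assms by (simp add: DB_formula hB_def add.commute)

lemma DB_self: "DB \<alpha> x x = 0"
  unfolding DB_def by (rule renyi_self)

lemma hB_pos: "0 < x \<Longrightarrow> 0 < y \<Longrightarrow> 0 < hB \<alpha> x y"
  unfolding hB_def by (intro add_pos_nonneg) auto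

lemma DB_LB:
  assumes a: "\<alpha> > 1" and "0 \<le> y'" "y' \<le> y" "y < x" "x \<le> x'" "x' \<le> 1"
  shows "DB \<alpha> x y \<le> DB \<alpha> x' y'"
proof (cases "y' = 0")
  case True
  then show ?thesis using assms by (simp add: DB_formula)
next
  case False
  then have y': "0 < y'" using assms by auto
  have "hB \<alpha> x y \<le> hB \<alpha> x' y"
    using assms y' by (intro hB_mono1) auto
  also have "\<dots> \<le> hB \<alpha> x' y'"
    using assms y' by (intro hB_mono2) auto
  finally have h: "hB \<alpha> x y \<le> hB \<alpha> x' y'" .
  have "ln (hB \<alpha> x y) \<le> ln (hB \<alpha> x' y')"
    using h hB_pos[of x y \<alpha>] assms y' by simp
  then have "ln (hB \<alpha> x y) / (\<alpha> - 1) \<le> ln (hB \<alpha> x' y') / (\<alpha> - 1)"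
    using a by (simp add: divide_right_mono)
  then show ?thesis using assms y' by (simp add: DB_formula)
qed

lemma DB_LB2:
  assumes a: "\<alpha> > 1" and "0 \<le> x'" "x' \<le> x" "x < y" "y \<le> y'" "y' \<le> 1"
  shows "DB \<alpha> x y \<le> DB \<alpha> x' y'"
proof -
  have "DB \<alpha> (1 - x) (1 - y) \<le> DB \<alpha> (1 - x') (1 - y')"
    using assms by (intro DB_LB) auto
  then show ?thesis using assms by (simp add: DB_sym[of x y] DB_sym[of x' y'])
qed


definition lo :: "real \<Rightarrow> real \<Rightarrow> real" where "lo dl p = max 0 ((p - dl) / (1 - dl))"
definition hi :: "real \<Rightarrow> real \<Rightarrow> real" where "hi dl p = min 1 (p / (1 - dl))"

lemma mix_bern:
  assumes "0 < dl" "0 \<le> p" "p \<le> 1" "0 \<le> x" "x \<le> 1" "(1 - dl) * x \<le> p" "(1 - dl) * (1 - x) \<le> 1 - p"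
  shows "\<forall>b. pmf (bernoulli_pmf p) b = (1 - dl) * pmf (bernoulli_pmf x) b
            + dl * pmf (bernoulli_pmf ((p - (1 - dl) * x) / dl)) b"
proof
  fix b
  have z: "0 \<le> (p - (1 - dl) * x) / dl" "(p - (1 - dl) * x) / dl \<le> 1"
    using assms by (auto simp: field_simps)
  show "pmf (bernoulli_pmf p) b = (1 - dl) * pmf (bernoulli_pmf x) b
            + dl * pmf (bernoulli_pmf ((p - (1 - dl) * x) / dl)) b"
    using assms z by (cases b) (simp_all add: field_simps)
qed

lemma approx_le_DB:
  assumes "0 < dl" "0 \<le> p" "p \<le> 1" "0 \<le> x" "x \<le> 1" "(1 - dl) * x \<le> p" "(1 - dl) * (1 - x) \<le> 1 - p"
    "0 \<le> q" "q \<le> 1" "0 \<le> y" "y \<le> 1" "(1 - dl) * y \<le> q" "(1 - dl) * (1 - y) \<le> 1 - q"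
  shows "approx_renyi dl \<alpha> (bernoulli_pmf p) (bernoulli_pmf q) \<le> DB \<alpha> x y"
  unfolding approx_renyi_def DB_def
  apply (rule INF_lower2[of "(bernoulli_pmf x, bernoulli_pmf ((p - (1 - dl) * x) / dl),
                                bernoulli_pmf y, bernoulli_pmf ((q - (1 - dl) * y) / dl))"])
  using mix_bern[of dl p x] mix_bern[of dl q y] assms by auto

lemma dec_range:
  assumes "0 < dl" "dl < 1" "0 \<le> p" "p \<le> 1"
    "\<forall>b. pmf (bernoulli_pmf p) b = (1 - dl) * pmf P' b + dl * pmf P'' b"
  shows "lo dl p \<le> pmf P' True \<and> pmf P' True \<le> hi dl p"
proof -
  define x where "x = pmf P' True"
  define z where "z = pmf P'' True"
  have x: "0 \<le> x" "x \<le> 1" and z: "0 \<le> z" "z \<le> 1"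
    using bool_pmf(2,3) unfolding x_def z_def by auto
  have T0: "pmf (bernoulli_pmf p) True = (1 - dl) * pmf P' True + dl * pmf P'' True"
    using assms(5) by blast
  have T: "p = (1 - dl) * x + dl * z" using T0 assms(3,4) unfolding x_def z_def by simp
  have "x \<le> p / (1 - dl)" using T assms z by (simp add: field_simps)
  moreover have "(p - dl) / (1 - dl) \<le> x" using T assms z by (simp add: field_simps)
  ultimately show ?thesis using x unfolding lo_def hi_def x_def by auto
qed

lemma approx_ge_DB:
  assumes "0 < dl" "dl < 1" "0 \<le> p" "p \<le> 1" "0 \<le> q" "q \<le> 1"
    and H: "\<And>x y. lo dl p \<le> x \<Longrightarrow> x \<le> hi dl p \<Longrightarrow> lo dl q \<le> y \<Longrightarrow> y \<le> hi dl q \<Longrightarrow> c \<le> DB \<alpha> x y"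
  shows "c \<le> approx_renyi dl \<alpha> (bernoulli_pmf p) (bernoulli_pmf q)"
  unfolding approx_renyi_def
proof (rule INF_greatest)
  fix t assume t: "t \<in> {(P', P'', Q', Q'').
                (\<forall>x. pmf (bernoulli_pmf p) x = (1 - dl) * pmf P' x + dl * pmf P'' x) \<and>
                (\<forall>x. pmf (bernoulli_pmf q) x = (1 - dl) * pmf Q' x + dl * pmf Q'' x)}"
  then obtain P' P'' Q' Q'' where tt: "t = (P', P'', Q', Q'')"
    and d1: "\<forall>x. pmf (bernoulli_pmf p) x = (1 - dl) * pmf P' x + dl * pmf P'' x"
    and d2: "\<forall>x. pmf (bernoulli_pmf q) x = (1 - dl) * pmf Q' x + dl * pmf Q'' x"
    by auto
  have r1: "lo dl p \<le> pmf P' True \<and> pmf P' True \<le> hi dl p" using dec_range[OF assms(1-4) d1] .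
  have r2: "lo dl q \<le> pmf Q' True \<and> pmf Q' True \<le> hi dl q" using dec_range[OF assms(1,2,5,6) d2] .
  have "c \<le> DB \<alpha> (pmf P' True) (pmf Q' True)" using H r1 r2 by auto
  also have "DB \<alpha> (pmf P' True) (pmf Q' True) = renyi_div \<alpha> P' Q'"
    unfolding DB_def by (simp flip: bool_pmf(4))
  finally show "c \<le> (case t of (P', P'', Q', Q'') \<Rightarrow> renyi_div \<alpha> P' Q')" using tt by simp
qed

lemma approx_mono_dl:
  fixes P Q :: "bool pmf"
  assumes "0 < dl" "dl \<le> dl'"
  shows "approx_renyi dl' \<alpha> P Q \<le> approx_renyi dl \<alpha> P Q"
  unfolding approx_renyi_def
proof (rule INF_mono)
  fix m assume m: "m \<in> {(P', P'', Q', Q'').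
                (\<forall>x. pmf P x = (1 - dl) * pmf P' x + dl * pmf P'' x) \<and>
                (\<forall>x. pmf Q x = (1 - dl) * pmf Q' x + dl * pmf Q'' x)}"
  then obtain P' P'' Q' Q'' where tt: "m = (P', P'', Q', Q'')"
    and d1: "\<forall>x. pmf P x = (1 - dl) * pmf P' x + dl * pmf P'' x"
    and d2: "\<forall>x. pmf Q x = (1 - dl) * pmf Q' x + dl * pmf Q'' x"
    by auto
  have conv: "\<forall>x. pmf R x = (1 - dl') * pmf R' x
       + dl' * pmf (bernoulli_pmf (((dl' - dl) * pmf R' True + dl * pmf R'' True) / dl')) x"
    if d: "\<forall>x. pmf R x = (1 - dl) * pmf R' x + dl * pmf R'' x" for R R' R'' :: "bool pmf"
  proof
    fix x
    define a where "a = pmf R' True"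
    define c where "c = pmf R'' True"
    have a: "0 \<le> a" "a \<le> 1" and c: "0 \<le> c" "c \<le> 1"
      using bool_pmf(2,3) unfolding a_def c_def by auto
    have n1: "0 \<le> (dl' - dl) * a" "0 \<le> dl * c" using a c assms by auto
    have n2: "(dl' - dl) * a \<le> dl' - dl" "dl * c \<le> dl"
      using a c assms by (auto intro: mult_left_le)
    have s: "(dl' - dl) * a + dl * c \<le> dl'" using n2 by linarith
    have z: "0 \<le> ((dl' - dl) * a + dl * c) / dl'" "((dl' - dl) * a + dl * c) / dl' \<le> 1"
      using n1 assms by simp
      (use s assms in \<open>simp add: divide_le_eq_1\<close>)
    show "pmf R x = (1 - dl') * pmf R' x
       + dl' * pmf (bernoulli_pmf (((dl' - dl) * pmf R' True + dl * pmf R'' True) / dl')) x"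
      proof -
      have RT: "pmf R True = (1 - dl) * a + dl * c" using d unfolding a_def c_def by blast
      have RF: "pmf R False = 1 - pmf R True" "pmf R' False = 1 - a" "pmf R'' False = 1 - c"
        using bool_pmf(1) unfolding a_def c_def by auto
      show ?thesis
        using z assms
        by (cases x) (simp_all add: RT RF a_def[symmetric] c_def[symmetric] field_simps)
      qed
  qed
  show "\<exists>n\<in>{(P', P'', Q', Q'').
                (\<forall>x. pmf P x = (1 - dl') * pmf P' x + dl' * pmf P'' x) \<and>
                (\<forall>x. pmf Q x = (1 - dl') * pmf Q' x + dl' * pmf Q'' x)}.
          (case n of (P', P'', Q', Q'') \<Rightarrow> renyi_div \<alpha> P' Q')
          \<le> (case m of (P', P'', Q', Q'') \<Rightarrow> renyi_div \<alpha> P' Q')"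
    using conv[OF d1] conv[OF d2] tt by force
qed

lemma approx_self:
  fixes P :: "'a::finite pmf"
  shows "approx_renyi dl \<alpha> P P \<le> 0"
  unfolding approx_renyi_def
  by (rule INF_lower2[of "(P, P, P, P)"]) (auto simp: renyi_self algebra_simps)

lemma approx_big_dl:
  assumes "1 \<le> dl" "0 \<le> p" "p \<le> 1" "0 \<le> q" "q \<le> 1"
  shows "approx_renyi dl \<alpha> (bernoulli_pmf p) (bernoulli_pmf q) \<le> 0"
proof -
  have "approx_renyi dl \<alpha> (bernoulli_pmf p) (bernoulli_pmf q) \<le> DB \<alpha> 0 0"
    using assms by (intro approx_le_DB) auto
  then show ?thesis by (simp add: DB_self)
qed


lemma lohi:
  assumes "0 < dl" "dl < 1" "0 \<le> p" "p \<le> 1"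
  shows "0 \<le> lo dl p" "lo dl p \<le> p" "p \<le> hi dl p" "hi dl p \<le> 1" "lo dl p \<le> 1" "0 \<le> hi dl p"
  using assms unfolding lo_def hi_def by (auto simp: field_simps)

lemma lo_mono: "dl < 1 \<Longrightarrow> p \<le> p' \<Longrightarrow> lo dl p \<le> lo dl p'"
  unfolding lo_def by (intro max.mono) (auto intro: divide_right_mono)

lemma in_lohi:
  assumes "0 < dl" "dl < 1" "0 \<le> p" "p \<le> 1" "lo dl p \<le> x" "x \<le> hi dl p"
  shows "0 \<le> x" "x \<le> 1" "(1 - dl) * x \<le> p" "(1 - dl) * (1 - x) \<le> 1 - p"
proof -
  show "0 \<le> x" "x \<le> 1" using assms unfolding lo_def hi_def by auto
  have "x \<le> p / (1 - dl)" using assms unfolding hi_def by auto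
  then show "(1 - dl) * x \<le> p" using assms by (simp add: field_simps)
  have "(p - dl) / (1 - dl) \<le> x" using assms unfolding lo_def by auto
  then show "(1 - dl) * (1 - x) \<le> 1 - p" using assms by (simp add: field_simps)
qed

lemma approx_le_DB':
  assumes "0 < dl" "dl < 1" "0 \<le> p" "p \<le> 1" "0 \<le> q" "q \<le> 1"
    "lo dl p \<le> x" "x \<le> hi dl p" "lo dl q \<le> y" "y \<le> hi dl q"
  shows "approx_renyi dl \<alpha> (bernoulli_pmf p) (bernoulli_pmf q) \<le> DB \<alpha> x y"
  using in_lohi[of dl p x] in_lohi[of dl q y] assms by (intro approx_le_DB) auto

lemma approx_pq_iff:
  assumes a: "\<alpha> > 1" and "0 \<le> e" "0 < dl" "dl < 1" "0 \<le> q" "q \<le> p" "p \<le> 1"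
  shows "approx_renyi dl \<alpha> (bernoulli_pmf p) (bernoulli_pmf q) \<le> ereal e \<longleftrightarrow>
           (lo dl p \<le> hi dl q \<or> DB \<alpha> (lo dl p) (hi dl q) \<le> ereal e)"
    and "approx_renyi dl \<alpha> (bernoulli_pmf q) (bernoulli_pmf p) \<le> ereal e \<longleftrightarrow>
           (lo dl p \<le> hi dl q \<or> DB \<alpha> (hi dl q) (lo dl p) \<le> ereal e)"
proof -
  have p: "0 \<le> p" "q \<le> 1" using assms by auto
  note lp = lohi[OF assms(3,4) p(1) assms(7)]
  note lq = lohi[OF assms(3,4) assms(5) p(2)]
  have lqp: "lo dl q \<le> lo dl p" using lo_mono assms by auto
  {
    assume ov: "lo dl p \<le> hi dl q"
    have "approx_renyi dl \<alpha> (bernoulli_pmf p) (bernoulli_pmf q) \<le> DB \<alpha> (lo dl p) (lo dl p)"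
      using assms lp lq lqp ov p by (intro approx_le_DB') auto
    then have 1: "approx_renyi dl \<alpha> (bernoulli_pmf p) (bernoulli_pmf q) \<le> ereal e"
      using assms by (simp add: DB_self order_trans)
    have "approx_renyi dl \<alpha> (bernoulli_pmf q) (bernoulli_pmf p) \<le> DB \<alpha> (lo dl p) (lo dl p)"
      using assms lp lq lqp ov p by (intro approx_le_DB') auto
    then have 2: "approx_renyi dl \<alpha> (bernoulli_pmf q) (bernoulli_pmf p) \<le> ereal e"
      using assms by (simp add: DB_self order_trans)
    note 1 2
  } note ovc = this
  {
    assume nov: "\<not> lo dl p \<le> hi dl q"
    have "approx_renyi dl \<alpha> (bernoulli_pmf p) (bernoulli_pmf q) \<le> DB \<alpha> (lo dl p) (hi dl q)"
      using assms lp lq p by (intro approx_le_DB') auto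
    moreover have "DB \<alpha> (lo dl p) (hi dl q) \<le> approx_renyi dl \<alpha> (bernoulli_pmf p) (bernoulli_pmf q)"
    proof (rule approx_ge_DB)
      fix x y assume "lo dl p \<le> x" "x \<le> hi dl p" "lo dl q \<le> y" "y \<le> hi dl q"
      then show "DB \<alpha> (lo dl p) (hi dl q) \<le> DB \<alpha> x y"
        using nov lp lq a by (intro DB_LB) auto
    qed (use assms p in auto)
    moreover have "approx_renyi dl \<alpha> (bernoulli_pmf q) (bernoulli_pmf p) \<le> DB \<alpha> (hi dl q) (lo dl p)"
      using assms lp lq p by (intro approx_le_DB') auto
    moreover have "DB \<alpha> (hi dl q) (lo dl p) \<le> approx_renyi dl \<alpha> (bernoulli_pmf q) (bernoulli_pmf p)"
    proof (rule approx_ge_DB)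
      fix x y assume "lo dl q \<le> x" "x \<le> hi dl q" "lo dl p \<le> y" "y \<le> hi dl p"
      then show "DB \<alpha> (hi dl q) (lo dl p) \<le> DB \<alpha> x y"
        using nov lp lq a by (intro DB_LB2) auto
    qed (use assms p in auto)
    ultimately have "approx_renyi dl \<alpha> (bernoulli_pmf p) (bernoulli_pmf q) = DB \<alpha> (lo dl p) (hi dl q)"
      "approx_renyi dl \<alpha> (bernoulli_pmf q) (bernoulli_pmf p) = DB \<alpha> (hi dl q) (lo dl p)"
      by auto
  } note novc = this
  show "approx_renyi dl \<alpha> (bernoulli_pmf p) (bernoulli_pmf q) \<le> ereal e \<longleftrightarrow>
           (lo dl p \<le> hi dl q \<or> DB \<alpha> (lo dl p) (hi dl q) \<le> ereal e)"
    by (cases "lo dl p \<le> hi dl q") (use ovc novc in auto)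
  show "approx_renyi dl \<alpha> (bernoulli_pmf q) (bernoulli_pmf p) \<le> ereal e \<longleftrightarrow>
           (lo dl p \<le> hi dl q \<or> DB \<alpha> (hi dl q) (lo dl p) \<le> ereal e)"
    by (cases "lo dl p \<le> hi dl q") (use ovc novc in auto)
qed

definition Tset :: "real \<Rightarrow> real \<Rightarrow> real \<Rightarrow> real set" where
  "Tset \<alpha> e b = {x \<in> {0..1}. x \<le> b \<or> (DB \<alpha> x b \<le> ereal e \<and> DB \<alpha> b x \<le> ereal e)}"

lemma Tset_down:
  assumes a: "\<alpha> > 1" and "0 \<le> b" "0 \<le> x1" "x1 \<le> x2" "x2 \<in> Tset \<alpha> e b"
  shows "x1 \<in> Tset \<alpha> e b"
proof (cases "x1 \<le> b")
  case True then show ?thesis using assms unfolding Tset_def by auto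
next
  case False
  then have "DB \<alpha> x2 b \<le> ereal e" "DB \<alpha> b x2 \<le> ereal e" "x2 \<le> 1"
    using assms unfolding Tset_def by auto
  moreover have "DB \<alpha> x1 b \<le> DB \<alpha> x2 b" using False assms \<open>x2 \<le> 1\<close> by (intro DB_LB) auto
  moreover have "DB \<alpha> b x1 \<le> DB \<alpha> b x2" using False assms \<open>x2 \<le> 1\<close> by (intro DB_LB2) auto
  ultimately show ?thesis using assms unfolding Tset_def by auto
qed


lemma DB_le_iff:
  assumes a: "\<alpha> > 1" and "0 < x" "x < 1" "0 < y" "y < 1"
  shows "DB \<alpha> x y \<le> ereal e \<longleftrightarrow> hB \<alpha> x y \<le> exp ((\<alpha> - 1) * e)"
proof -
  have h: "0 < hB \<alpha> x y" using assms by (intro hB_pos) auto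
  have "DB \<alpha> x y \<le> ereal e \<longleftrightarrow> ln (hB \<alpha> x y) / (\<alpha> - 1) \<le> e"
    using assms by (simp add: DB_formula)
  also have "\<dots> \<longleftrightarrow> ln (hB \<alpha> x y) \<le> (\<alpha> - 1) * e"
    using a by (simp add: pos_divide_le_eq mult.commute)
  also have "\<dots> \<longleftrightarrow> hB \<alpha> x y \<le> exp ((\<alpha> - 1) * e)"
    using h by (metis exp_le_cancel_iff exp_ln)
  finally show ?thesis .
qed

lemma blowup:
  assumes a: "\<alpha> > 1" and b: "0 < b" "b < 1" and E: "0 < E"
  obtains \<eta> where "0 < \<eta>" "\<eta> \<le> (1 - b) / 2" "\<And>x. 1 - \<eta> < x \<Longrightarrow> x < 1 \<Longrightarrow> E < hB \<alpha> b x"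
proof -
  define c where "c = (1 - b) powr \<alpha>"
  have c: "0 < c" using b unfolding c_def by simp
  define K where "K = E / c + 1"
  have K: "0 < K" using c E unfolding K_def by (simp add: add_pos_nonneg)
  define \<eta>0 where "\<eta>0 = K powr (1 / (1 - \<alpha>))"
  have e0: "0 < \<eta>0" using K unfolding \<eta>0_def by simp
  have e0K: "\<eta>0 powr (1 - \<alpha>) = K" unfolding \<eta>0_def using K a by (simp add: powr_powr)
  define \<eta> where "\<eta> = min ((1 - b) / 2) \<eta>0"
  show ?thesis
  proof (rule that[of \<eta>])
    show "0 < \<eta>" using e0 b unfolding \<eta>_def by auto
    show "\<eta> \<le> (1 - b) / 2" unfolding \<eta>_def by (rule min.cobounded1)
    fix x assume x: "1 - \<eta> < x" "x < 1"
    have "1 - x < \<eta>0" using x unfolding \<eta>_def by auto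
    then have "\<eta>0 powr (1 - \<alpha>) < (1 - x) powr (1 - \<alpha>)"
      using x a by (intro powr_less_mono2_neg) auto
    then have gt: "K < (1 - x) powr (1 - \<alpha>)" using e0K by simp
    have "E < c * K" using c unfolding K_def by (simp add: field_simps)
    also have "\<dots> < c * (1 - x) powr (1 - \<alpha>)" using gt c by simp
    also have "\<dots> \<le> hB \<alpha> b x" unfolding hB_def c_def by simp
    finally show "E < hB \<alpha> b x" .
  qed
qed

lemma Tset_closed:
  assumes a: "\<alpha> > 1" and b: "0 \<le> b" "b \<le> 1"
  shows "closed (Tset \<alpha> e b)"
proof -
  consider "b = 0" | "b = 1" | "0 < b \<and> b < 1" using b by linarith
  then show ?thesis
  proof cases
    case 1
    have "Tset \<alpha> e b = {0}"
      unfolding Tset_def using 1 by (auto simp: DB_formula split: if_split_asm)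
    then show ?thesis by simp
  next
    case 2
    have "Tset \<alpha> e b = {0..1}" unfolding Tset_def using 2 by auto
    then show ?thesis by simp
  next
    case 3
    define E where "E = exp ((\<alpha> - 1) * e)"
    have E: "0 < E" unfolding E_def by simp
    obtain \<eta> where eta: "0 < \<eta>" "\<eta> \<le> (1 - b) / 2" "\<And>x. 1 - \<eta> < x \<Longrightarrow> x < 1 \<Longrightarrow> E < hB \<alpha> b x"
      using blowup[OF a _ _ E, of b] 3 by auto
    define f1 where "f1 = (\<lambda>x. hB \<alpha> x b)"
    define f2 where "f2 = (\<lambda>x. hB \<alpha> b x)"
    have eq: "Tset \<alpha> e b = {0..b} \<union> (({b..1-\<eta>} \<inter> f1 -` {..E}) \<inter> ({b..1-\<eta>} \<inter> f2 -` {..E}))"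
    proof (intro equalityI subsetI)
      fix x assume x: "x \<in> Tset \<alpha> e b"
      show "x \<in> {0..b} \<union> (({b..1-\<eta>} \<inter> f1 -` {..E}) \<inter> ({b..1-\<eta>} \<inter> f2 -` {..E}))"
      proof (cases "x \<le> b")
        case True then show ?thesis using x unfolding Tset_def by auto
      next
        case False
        then have d: "DB \<alpha> x b \<le> ereal e" "DB \<alpha> b x \<le> ereal e" "x \<le> 1" using x unfolding Tset_def by auto
        have "x \<noteq> 1" using d 3 by (auto simp: DB_formula)
        then have x1: "x < 1" using d by auto
        have h: "hB \<alpha> x b \<le> E" "hB \<alpha> b x \<le> E"
          using d x1 False 3 a unfolding E_def by (auto simp: DB_le_iff)
        then have "x \<le> 1 - \<eta>" using eta(3)[of x] x1 by force
        then show ?thesis using h False unfolding f1_def f2_def by auto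
      qed
    next
      fix x assume x: "x \<in> {0..b} \<union> (({b..1-\<eta>} \<inter> f1 -` {..E}) \<inter> ({b..1-\<eta>} \<inter> f2 -` {..E}))"
      show "x \<in> Tset \<alpha> e b"
      proof (cases "x \<le> b")
        case True then show ?thesis using x b unfolding Tset_def by auto
      next
        case False
        then have x': "b < x" "x \<le> 1 - \<eta>" "hB \<alpha> x b \<le> E" "hB \<alpha> b x \<le> E"
          using x unfolding f1_def f2_def by auto
        then have "DB \<alpha> x b \<le> ereal e" "DB \<alpha> b x \<le> ereal e"
          using 3 eta a unfolding E_def by (auto simp: DB_le_iff)
        then show ?thesis using x' 3 eta unfolding Tset_def by auto
      qed
    qed
    have c1: "continuous_on {b..1-\<eta>} f1"
      unfolding f1_def hB_def using 3 eta by (intro continuous_intros) auto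
    have c2: "continuous_on {b..1-\<eta>} f2"
      unfolding f2_def hB_def using 3 eta by (intro continuous_intros) auto
    show ?thesis unfolding eq
      by (intro closed_Un closed_Int continuous_closed_preimage c1 c2) auto
  qed
qed


definition Gp :: "real \<Rightarrow> real \<Rightarrow> real \<Rightarrow> real \<Rightarrow> real \<Rightarrow> bool" where
  "Gp \<alpha> q e dl p \<longleftrightarrow> p \<in> {q..1} \<and>
     approx_renyi dl \<alpha> (bernoulli_pmf p) (bernoulli_pmf q) \<le> ereal e \<and>
     approx_renyi dl \<alpha> (bernoulli_pmf q) (bernoulli_pmf p) \<le> ereal e"

lemma L_fun_Gp: "L_fun \<alpha> q e dl = (GREATEST p. Gp \<alpha> q e dl p)"
  unfolding L_fun_def Gp_def ..

lemma G_max: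
  assumes a: "\<alpha> > 1" "0 < e" "0 < dl" "0 \<le> q" "q \<le> 1"
  shows "\<exists>m. Gp \<alpha> q e dl m \<and> (\<forall>p. Gp \<alpha> q e dl p \<longrightarrow> p \<le> m) \<and>
             (\<forall>p. q \<le> p \<and> p \<le> m \<longrightarrow> Gp \<alpha> q e dl p)"
proof (cases "dl < 1")
  case False
  have "Gp \<alpha> q e dl p \<longleftrightarrow> p \<in> {q..1}" for p
  proof
    assume p: "p \<in> {q..1}"
    have "approx_renyi dl \<alpha> (bernoulli_pmf p) (bernoulli_pmf q) \<le> 0"
      "approx_renyi dl \<alpha> (bernoulli_pmf q) (bernoulli_pmf p) \<le> 0"
      using p False assms by (auto intro!: approx_big_dl)
    moreover have "(0::ereal) \<le> ereal e" using assms by simp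
    ultimately show "Gp \<alpha> q e dl p" using p unfolding Gp_def by (meson order_trans)
  qed (simp add: Gp_def)
  then show ?thesis using assms by (intro exI[of _ 1]) auto
next
  case True
  define b where "b = hi dl q"
  have b: "0 \<le> b" "b \<le> 1" using lohi[OF _ True assms(4,5)] assms unfolding b_def by auto
  have char: "Gp \<alpha> q e dl p \<longleftrightarrow> p \<in> {q..1} \<and> lo dl p \<in> Tset \<alpha> e b" for p
  proof (cases "p \<in> {q..1}")
    case pq: True
    note i1 = approx_pq_iff(1)[OF a(1) _ a(3) True a(4), of e p]
    note i2 = approx_pq_iff(2)[OF a(1) _ a(3) True a(4), of e p]
    have l: "0 \<le> lo dl p" "lo dl p \<le> 1" using lohi[OF a(3) True, of p] pq a by auto
    show ?thesis using i1 i2 pq a l unfolding Gp_def Tset_def b_def by auto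
  qed (auto simp: Gp_def)
  define S where "S = {q..1} \<inter> lo dl -` Tset \<alpha> e b"
  have cl: "continuous_on {q..1} (lo dl)"
    unfolding lo_def[abs_def] using True by (intro continuous_intros) auto
  have "closed S" unfolding S_def
    using Tset_closed[OF a(1) b] cl by (intro continuous_closed_preimage) auto
  then have "compact ({q..1} \<inter> S)" by (intro compact_Int_closed) auto
  moreover have "{q..1} \<inter> S = S" unfolding S_def by auto
  ultimately have cS: "compact S" by simp
  have "Gp \<alpha> q e dl q"
  proof -
    have "approx_renyi dl \<alpha> (bernoulli_pmf q) (bernoulli_pmf q) \<le> 0" by (rule approx_self)
    moreover have "(0::ereal) \<le> ereal e" using assms by simp
    ultimately show ?thesis using assms unfolding Gp_def by (meson order_trans atLeastAtMost_iff order_refl)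
  qed
  then have "q \<in> S" using char unfolding S_def by auto
  then obtain m where m: "m \<in> S" "\<forall>t\<in>S. t \<le> m"
    using compact_attains_sup[OF cS] by blast
  have down: "Gp \<alpha> q e dl p" if "q \<le> p" "p \<le> m" for p
  proof -
    have mm: "m \<in> {q..1}" "lo dl m \<in> Tset \<alpha> e b" using m unfolding S_def by auto
    have "lo dl p \<le> lo dl m" using lo_mono[OF True that(2)] .
    moreover have "0 \<le> lo dl p" using that a mm unfolding lo_def by auto
    ultimately have "lo dl p \<in> Tset \<alpha> e b" using Tset_down[OF a(1) b(1) _ _ mm(2)] by auto
    then show ?thesis using char that mm by auto
  qed
  show ?thesis
    by (rule exI[of _ m]) (use m char down in \<open>auto simp: S_def\<close>)
qed

lemma L_props:
  assumes a: "\<alpha> > 1" "0 < e" "0 < dl" "0 \<le> q" "q \<le> 1"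
  shows "Gp \<alpha> q e dl (L_fun \<alpha> q e dl)" "\<And>p. Gp \<alpha> q e dl p \<Longrightarrow> p \<le> L_fun \<alpha> q e dl"
    "\<And>p. q \<le> p \<Longrightarrow> p \<le> L_fun \<alpha> q e dl \<Longrightarrow> Gp \<alpha> q e dl p"
proof -
  obtain m where m: "Gp \<alpha> q e dl m" "\<forall>p. Gp \<alpha> q e dl p \<longrightarrow> p \<le> m"
    "\<forall>p. q \<le> p \<and> p \<le> m \<longrightarrow> Gp \<alpha> q e dl p"
    using G_max[OF assms] by blast
  have L: "L_fun \<alpha> q e dl = m" unfolding L_fun_Gp using m by (intro Greatest_equality) auto
  show "Gp \<alpha> q e dl (L_fun \<alpha> q e dl)" "\<And>p. Gp \<alpha> q e dl p \<Longrightarrow> p \<le> L_fun \<alpha> q e dl"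
    "\<And>p. q \<le> p \<Longrightarrow> p \<le> L_fun \<alpha> q e dl \<Longrightarrow> Gp \<alpha> q e dl p"
    using m unfolding L by auto
qed

lemma L_range:
  assumes a: "\<alpha> > 1" "0 < e" "0 < dl" "0 \<le> q" "q \<le> 1"
  shows "q \<le> L_fun \<alpha> q e dl" "L_fun \<alpha> q e dl \<le> 1"
  using L_props(1)[OF assms] unfolding Gp_def by auto

lemma L_mono:
  assumes a: "\<alpha> > 1" "0 < e" "0 < dl" "0 \<le> q" "q \<le> 1" "e \<le> e'" "dl \<le> dl'"
  shows "L_fun \<alpha> q e dl \<le> L_fun \<alpha> q e' dl'"
proof -
  let ?m = "L_fun \<alpha> q e dl"
  have g: "Gp \<alpha> q e dl ?m" by (rule L_props(1)[OF a(1-5)])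
  have "approx_renyi dl' \<alpha> (bernoulli_pmf ?m) (bernoulli_pmf q) \<le> approx_renyi dl \<alpha> (bernoulli_pmf ?m) (bernoulli_pmf q)"
    "approx_renyi dl' \<alpha> (bernoulli_pmf q) (bernoulli_pmf ?m) \<le> approx_renyi dl \<alpha> (bernoulli_pmf q) (bernoulli_pmf ?m)"
    using a by (auto intro!: approx_mono_dl)
  moreover have "ereal e \<le> ereal e'" using a by simp
  ultimately have "Gp \<alpha> q e' dl' ?m" using g unfolding Gp_def by (meson order_trans)
  then show ?thesis using L_props(2)[of \<alpha> e' dl' q] a by auto
qed


declare psi_r.simps [simp del]

context
  fixes \<alpha> \<epsilon>0 \<delta>0 r \<epsilon>1 \<delta>1 \<Delta>d \<Delta> :: real
  assumes pa: "\<alpha> > 1" "\<epsilon>0 > 0" "\<delta>0 > 0" "r > 0" "\<epsilon>1 > 0" "\<delta>1 > 0" "\<Delta>d > 0" "\<Delta> > 0"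
begin

abbreviation "ps \<equiv> psi_r \<alpha> \<epsilon>0 \<delta>0 \<epsilon>1 \<delta>1 r \<Delta>d \<Delta>"
abbreviation "Nd \<equiv> N_disc \<Delta>d \<Delta>"
abbreviation "ee i \<equiv> \<epsilon>0 + \<epsilon>1 * (\<Delta>d * real (i - 1)) powr r"
abbreviation "dd i \<equiv> \<delta>0 + \<delta>1 * (\<Delta>d * real (i - 1)) powr r"

lemma Nd_ge1: "1 \<le> Nd"
proof -
  have "0 < \<Delta> / \<Delta>d" using pa by simp
  then have "1 \<le> \<lceil>\<Delta> / \<Delta>d\<rceil>" by simp
  then show ?thesis unfolding N_disc_def by linarith
qed

lemma ee_pos: "0 < ee i" using pa by (simp add: add_pos_nonneg)
lemma dd_pos: "0 < dd i" using pa by (simp add: add_pos_nonneg)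

lemma ee_mono: "i \<le> j \<Longrightarrow> ee i \<le> ee j"
proof -
  assume "i \<le> j"
  then have "(\<Delta>d * real (i - 1)) powr r \<le> (\<Delta>d * real (j - 1)) powr r"
    using pa by (intro powr_mono2) (auto intro!: mult_left_mono)
  then show ?thesis using pa by simp
qed

lemma dd_mono: "i \<le> j \<Longrightarrow> dd i \<le> dd j"
proof -
  assume "i \<le> j"
  then have "(\<Delta>d * real (i - 1)) powr r \<le> (\<Delta>d * real (j - 1)) powr r"
    using pa by (intro powr_mono2) (auto intro!: mult_left_mono)
  then show ?thesis using pa by simp
qed

lemma ps_eq: "n > 0 \<Longrightarrow> ps n = Min ((\<lambda>i. L_fun \<alpha> (ps (n - i)) (ee i) (dd i)) ` {1..min n Nd})"
  by (subst psi_r.simps) simp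

lemma ps_0: "ps 0 = 0"
  by (subst psi_r.simps) simp

lemma ps_range: "0 \<le> ps n \<and> ps n \<le> 1"
proof (induction n rule: less_induct)
  case (less n)
  show ?case
  proof (cases "n = 0")
    case True then show ?thesis by (simp add: ps_0)
  next
    case False
    let ?f = "\<lambda>i. L_fun \<alpha> (ps (n - i)) (ee i) (dd i)"
    have ne: "{1..min n Nd} \<noteq> {}" using False Nd_ge1 by auto
    have eqn: "ps n = Min (?f ` {1..min n Nd})" using ps_eq[of n] False by simp
    have "Min (?f ` {1..min n Nd}) \<in> ?f ` {1..min n Nd}"
      by (rule Min_in) (use ne in auto)
    then obtain i where i: "i \<in> {1..min n Nd}" "ps n = ?f i" using eqn by auto
    have ih: "0 \<le> ps (n - i) \<and> ps (n - i) \<le> 1" using less.IH[of "n - i"] i False by auto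
    have "ps (n - i) \<le> ?f i" "?f i \<le> 1"
      using L_range[OF pa(1) ee_pos dd_pos, of "ps (n - i)" i i] ih by auto
    then show ?thesis using i ih by auto
  qed
qed

lemma ps_step: "ps n \<le> ps (Suc n)"
proof -
  let ?f = "\<lambda>i. L_fun \<alpha> (ps (Suc n - i)) (ee i) (dd i)"
  have ne: "{1..min (Suc n) Nd} \<noteq> {}" using Nd_ge1 by auto
  have eqn: "ps (Suc n) = Min (?f ` {1..min (Suc n) Nd})" using ps_eq[of "Suc n"] by simp
  have "Min (?f ` {1..min (Suc n) Nd}) \<in> ?f ` {1..min (Suc n) Nd}"
    by (rule Min_in) (use ne in auto)
  then obtain i where i: "i \<in> {1..min (Suc n) Nd}" "ps (Suc n) = ?f i" using eqn by auto
  show ?thesis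
  proof (cases "i = 1")
    case True
    then show ?thesis using i L_range(1)[OF pa(1) ee_pos dd_pos, of "ps n" 1 1] ps_range[of n] by auto
  next
    case False
    then have i2: "2 \<le> i" "i \<le> Suc n" "i \<le> Nd" using i by auto
    then have n0: "n > 0" by auto
    have mem: "i - 1 \<in> {1..min n Nd}" using i2 by auto
    let ?g = "\<lambda>j. L_fun \<alpha> (ps (n - j)) (ee j) (dd j)"
    have "Min (?g ` {1..min n Nd}) \<le> ?g (i - 1)"
      using Min_le[of "?g ` {1..min n Nd}" "?g (i - 1)"] mem by blast
    then have "ps n \<le> L_fun \<alpha> (ps (n - (i - 1))) (ee (i - 1)) (dd (i - 1))"
      using ps_eq[OF n0] by simp
    also have "n - (i - 1) = Suc n - i" using i2 by auto
    also have "L_fun \<alpha> (ps (Suc n - i)) (ee (i - 1)) (dd (i - 1)) \<le> ?f i"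
      using ps_range[of "Suc n - i"] by (intro L_mono[OF pa(1) ee_pos dd_pos] ee_mono dd_mono) auto
    finally show ?thesis using i by simp
  qed
qed

lemma ps_mono: "m \<le> n \<Longrightarrow> ps m \<le> ps n"
  using lift_Suc_mono_le[of ps, OF ps_step] by blast

lemma ps_jump:
  assumes "1 \<le> k" "k \<le> Nd" "k \<le> n"
  shows "ps n \<le> L_fun \<alpha> (ps (n - k)) (ee k) (dd k)"
proof -
  let ?g = "\<lambda>j. L_fun \<alpha> (ps (n - j)) (ee j) (dd j)"
  have mem: "k \<in> {1..min n Nd}" using assms by auto
  have "Min (?g ` {1..min n Nd}) \<le> ?g k"
    using Min_le[of "?g ` {1..min n Nd}" "?g k"] mem by blast
  then show ?thesis using ps_eq[of n] assms by simp
qed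

end


definition mk :: "('u::finite \<Rightarrow> bool pmf) \<Rightarrow> 'u set pmf" where
  "mk K = map_pmf (\<lambda>f. {u. f u}) (Pi_pmf UNIV False K)"

lemma inj_Coll: "inj (\<lambda>f::'a \<Rightarrow> bool. {u. f u})"
  by (auto simp: inj_def fun_eq_iff set_eq_iff)

lemma pmf_mk: "pmf (mk K) S = (\<Prod>v\<in>UNIV. pmf (K v) (v \<in> S))"
proof -
  have "S = (\<lambda>f. {u. f u}) (\<lambda>v. v \<in> S)" by simp
  then have "pmf (mk K) S = pmf (Pi_pmf UNIV False K) (\<lambda>v. v \<in> S)"
    unfolding mk_def by (metis pmf_map_inj'[OF inj_Coll])
  also have "\<dots> = (\<Prod>v\<in>UNIV. pmf (K v) (v \<in> S))" by (simp add: pmf_Pi)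
  finally show ?thesis .
qed

lemma pmf_mk_split: "pmf (mk K) S = pmf (K u) (u \<in> S) * (\<Prod>v\<in>UNIV - {u}. pmf (K v) (v \<in> S))"
  unfolding pmf_mk by (rule prod.remove) auto

lemma rest_eq:
  assumes "\<And>v. v \<noteq> u \<Longrightarrow> K1 v = K2 v"
  shows "(\<Prod>v\<in>UNIV - {u}. pmf (K1 v) (v \<in> S)) = (\<Prod>v\<in>UNIV - {u}. pmf (K2 v) (v \<in> S))"
  using assms by (intro prod.cong) auto

lemma mk_decomp:
  assumes "\<forall>b. pmf (K u) b = (1 - d) * pmf A b + d * pmf B b"
  shows "\<forall>S. pmf (mk K) S = (1 - d) * pmf (mk (K(u := A))) S + d * pmf (mk (K(u := B))) S"
proof
  fix S
  let ?R = "\<Prod>v\<in>UNIV - {u}. pmf (K v) (v \<in> S)"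
  have "pmf (mk (K(u := A))) S = pmf A (u \<in> S) * ?R"
    using pmf_mk_split[of "K(u := A)" S u] rest_eq[of u "K(u := A)" K S] by simp
  moreover have "pmf (mk (K(u := B))) S = pmf B (u \<in> S) * ?R"
    using pmf_mk_split[of "K(u := B)" S u] rest_eq[of u "K(u := B)" K S] by simp
  moreover have "pmf (mk K) S = pmf (K u) (u \<in> S) * ?R" by (rule pmf_mk_split)
  ultimately show "pmf (mk K) S = (1 - d) * pmf (mk (K(u := A))) S + d * pmf (mk (K(u := B))) S"
    using assms by (simp add: algebra_simps)
qed

lemma sum_rest:
  fixes w :: "bool \<Rightarrow> real" and u :: "'u::finite"
  shows "(\<Sum>S\<in>UNIV. w (u \<in> S) * (\<Prod>v\<in>UNIV - {u}. pmf (K v) (v \<in> S))) = w True + w False"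
proof -
  let ?K0 = "K(u := bernoulli_pmf (1/2))"
  let ?R = "\<lambda>S. \<Prod>v\<in>UNIV - {u}. pmf (K v) (v \<in> S)"
  have R: "?R S = 2 * pmf (mk ?K0) S" for S
    using pmf_mk_split[of ?K0 S u] rest_eq[of u ?K0 K S] by simp
  have "(\<Sum>S\<in>UNIV. w (u \<in> S) * ?R S) = 2 * (\<Sum>S\<in>UNIV. pmf (mk ?K0) S *\<^sub>R w (u \<in> S))"
    by (simp add: R sum_distrib_left algebra_simps)
  also have "(\<Sum>S\<in>UNIV. pmf (mk ?K0) S *\<^sub>R w (u \<in> S)) = (LINT S|mk ?K0. w (u \<in> S))"
    by (rule integral_measure_pmf[symmetric]) auto
  also have "\<dots> = (LINT f|Pi_pmf UNIV False ?K0. w (f u))" unfolding mk_def by simp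
  also have "\<dots> = (LINT b|map_pmf (\<lambda>f. f u) (Pi_pmf UNIV False ?K0). w b)" by simp
  also have "map_pmf (\<lambda>f. f u) (Pi_pmf UNIV False ?K0) = bernoulli_pmf (1/2)"
    by (subst Pi_pmf_component) auto
  also have "(LINT b|bernoulli_pmf (1/2). w b) = (\<Sum>b\<in>UNIV. pmf (bernoulli_pmf (1/2)) b *\<^sub>R w b)"
    by (rule integral_measure_pmf) auto
  also have "\<dots> = (w True + w False) / 2" by (simp add: UNIV_bool)
  finally show ?thesis by simp
qed

lemma powr_self_split: "0 \<le> (x::real) \<Longrightarrow> x powr a * x powr (1 - a) = x"
  by (cases "x = 0") (simp_all add: powr_add[symmetric])

lemma renyi_mk:
  fixes K1 K2 :: "'u::finite \<Rightarrow> bool pmf"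
  assumes ag: "\<And>v. v \<noteq> u \<Longrightarrow> K1 v = K2 v"
  shows "renyi_div \<alpha> (mk K1) (mk K2) = renyi_div \<alpha> (K1 u) (K2 u)"
proof -
  let ?R = "\<lambda>S. \<Prod>v\<in>UNIV - {u}. pmf (K1 v) (v \<in> S)"
  have P1: "pmf (mk K1) S = pmf (K1 u) (u \<in> S) * ?R S" for S by (rule pmf_mk_split)
  have P2: "pmf (mk K2) S = pmf (K2 u) (u \<in> S) * ?R S" for S
  proof -
    have re: "(\<Prod>v\<in>UNIV - {u}. pmf (K1 v) (v \<in> S)) = (\<Prod>v\<in>UNIV - {u}. pmf (K2 v) (v \<in> S))"
      using ag by (intro prod.cong) auto
    show ?thesis by (simp add: pmf_mk_split[of K2 S u] re)
  qed
  have Rnn: "0 \<le> ?R S" for S by (intro prod_nonneg) auto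
  have "\<exists>c. pmf (K1 v) c > 0" for v
  proof -
    obtain c where "c \<in> set_pmf (K1 v)" using set_pmf_not_empty[of "K1 v"] by blast
    then have "pmf (K1 v) c > 0" using pmf_nonneg[of "K1 v" c] by (auto simp: set_pmf_iff)
    then show ?thesis by blast
  qed
  then obtain c where c: "\<And>v. pmf (K1 v) (c v) > 0" by metis
  define Sb where "Sb b = {v. if v = u then b else c v}" for b
  have RSb: "?R (Sb b) > 0" for b
    unfolding Sb_def using c by (intro prod_pos) auto
  have uSb: "(u \<in> Sb b) = b" for b unfolding Sb_def by simp
  have supp: "(\<exists>S. pmf (mk K1) S > 0 \<and> pmf (mk K2) S = 0) \<longleftrightarrow> (\<exists>b. pmf (K1 u) b > 0 \<and> pmf (K2 u) b = 0)"
  proof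
    assume "\<exists>S. pmf (mk K1) S > 0 \<and> pmf (mk K2) S = 0"
    then obtain S where S: "pmf (mk K1) S > 0" "pmf (mk K2) S = 0" by blast
    then have A: "pmf (K1 u) (u \<in> S) > 0" "?R S > 0"
      using P1[of S] Rnn[of S] by (auto simp: zero_less_mult_iff)
    have "pmf (K2 u) (u \<in> S) * ?R S = 0" using S(2) P2[of S] by metis
    then have "pmf (K2 u) (u \<in> S) = 0" using A(2) by (metis mult_eq_0_iff less_irrefl)
    then show "\<exists>b. pmf (K1 u) b > 0 \<and> pmf (K2 u) b = 0" using A by blast
  next
    assume "\<exists>b. pmf (K1 u) b > 0 \<and> pmf (K2 u) b = 0"
    then obtain b where b: "pmf (K1 u) b > 0" "pmf (K2 u) b = 0" by blast
    have "pmf (mk K1) (Sb b) > 0" using P1[of "Sb b"] b RSb[of b] uSb by simp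
    moreover have "pmf (mk K2) (Sb b) = 0" using P2[of "Sb b"] b uSb by simp
    ultimately show "\<exists>S. pmf (mk K1) S > 0 \<and> pmf (mk K2) S = 0" by blast
  qed
  define w where "w b = pmf (K1 u) b powr \<alpha> * pmf (K2 u) b powr (1 - \<alpha>)" for b
  have trm: "pmf (mk K1) S powr \<alpha> * pmf (mk K2) S powr (1 - \<alpha>) = w (u \<in> S) * ?R S" for S
  proof -
    have "pmf (mk K1) S powr \<alpha> * pmf (mk K2) S powr (1 - \<alpha>)
        = w (u \<in> S) * (?R S powr \<alpha> * ?R S powr (1 - \<alpha>))"
      unfolding P1 P2 w_def using Rnn[of S] by (simp add: powr_mult)
    also have "?R S powr \<alpha> * ?R S powr (1 - \<alpha>) = ?R S"
      by (rule powr_self_split[OF Rnn])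
    finally show ?thesis .
  qed
  have "(\<Sum>S\<in>UNIV. pmf (mk K1) S powr \<alpha> * pmf (mk K2) S powr (1 - \<alpha>)) = w True + w False"
    unfolding trm by (rule sum_rest)
  also have "\<dots> = (\<Sum>b\<in>UNIV. pmf (K1 u) b powr \<alpha> * pmf (K2 u) b powr (1 - \<alpha>))"
    unfolding w_def by (simp add: UNIV_bool)
  finally show ?thesis unfolding renyi_finite supp by simp
qed

lemma approx_mk:
  fixes K1 K2 :: "'u::finite \<Rightarrow> bool pmf"
  assumes ag: "\<And>v. v \<noteq> u \<Longrightarrow> K1 v = K2 v"
  shows "approx_renyi d \<alpha> (mk K1) (mk K2) \<le> approx_renyi d \<alpha> (K1 u) (K2 u)"
  unfolding approx_renyi_def
proof (rule INF_mono)
  fix m assume m: "m \<in> {(P', P'', Q', Q'').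
                (\<forall>x. pmf (K1 u) x = (1 - d) * pmf P' x + d * pmf P'' x) \<and>
                (\<forall>x. pmf (K2 u) x = (1 - d) * pmf Q' x + d * pmf Q'' x)}"
  then obtain A B C E where tt: "m = (A, B, C, E)"
    and d1: "\<forall>x. pmf (K1 u) x = (1 - d) * pmf A x + d * pmf B x"
    and d2: "\<forall>x. pmf (K2 u) x = (1 - d) * pmf C x + d * pmf E x"
    by auto
  have r: "renyi_div \<alpha> (mk (K1(u := A))) (mk (K2(u := C))) = renyi_div \<alpha> A C"
    using renyi_mk[of u "K1(u := A)" "K2(u := C)" \<alpha>] ag by simp
  show "\<exists>n\<in>{(P', P'', Q', Q'').
                (\<forall>x. pmf (mk K1) x = (1 - d) * pmf P' x + d * pmf P'' x) \<and>
                (\<forall>x. pmf (mk K2) x = (1 - d) * pmf Q' x + d * pmf Q'' x)}.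
          (case n of (P', P'', Q', Q'') \<Rightarrow> renyi_div \<alpha> P' Q')
          \<le> (case m of (P', P'', Q', Q'') \<Rightarrow> renyi_div \<alpha> P' Q')"
    apply (rule bexI[of _ "(mk (K1(u := A)), mk (K1(u := B)), mk (K2(u := C)), mk (K2(u := E)))"])
    using r tt mk_decomp[of K1 u, OF d1] mk_decomp[of K2 u, OF d2] by auto
qed


declare psi_r.simps [simp del]

lemma floor_facts:
  assumes "0 \<le> a" "0 < D"
  shows "real (nat \<lfloor>a / D\<rfloor>) \<le> a / D" "a / D < real (nat \<lfloor>a / D\<rfloor>) + 1"
proof -
  have "0 \<le> \<lfloor>a / D\<rfloor>" using assms by simp
  then have e: "real (nat \<lfloor>a / D\<rfloor>) = real_of_int \<lfloor>a / D\<rfloor>" by simp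
  show "real (nat \<lfloor>a / D\<rfloor>) \<le> a / D" "a / D < real (nat \<lfloor>a / D\<rfloor>) + 1"
    unfolding e by linarith+
qed

context
  fixes \<alpha> \<epsilon>0 \<delta>0 r \<epsilon>1 \<delta>1 \<Delta>d \<Delta> :: real
  assumes pa: "\<alpha> > 1" "\<epsilon>0 > 0" "\<delta>0 > 0" "r > 0" "\<epsilon>1 > 0" "\<delta>1 > 0" "\<Delta>d > 0" "\<Delta> > 0"
begin

lemma bern_step:
  assumes a: "0 \<le> a" "0 \<le> a'" "\<bar>a - a'\<bar> \<le> Di" "Di \<le> \<Delta>"
    and nn: "nat \<lfloor>a / \<Delta>d\<rfloor> \<le> nat \<lfloor>a' / \<Delta>d\<rfloor>"
  defines "n \<equiv> nat \<lfloor>a / \<Delta>d\<rfloor>" and "n' \<equiv> nat \<lfloor>a' / \<Delta>d\<rfloor>"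
  shows "approx_renyi (\<delta>0 + \<delta>1 * Di powr r) \<alpha>
           (bernoulli_pmf (psi_r \<alpha> \<epsilon>0 \<delta>0 \<epsilon>1 \<delta>1 r \<Delta>d \<Delta> n'))
           (bernoulli_pmf (psi_r \<alpha> \<epsilon>0 \<delta>0 \<epsilon>1 \<delta>1 r \<Delta>d \<Delta> n)) \<le> ereal (\<epsilon>0 + \<epsilon>1 * Di powr r)
       \<and> approx_renyi (\<delta>0 + \<delta>1 * Di powr r) \<alpha>
           (bernoulli_pmf (psi_r \<alpha> \<epsilon>0 \<delta>0 \<epsilon>1 \<delta>1 r \<Delta>d \<Delta> n))
           (bernoulli_pmf (psi_r \<alpha> \<epsilon>0 \<delta>0 \<epsilon>1 \<delta>1 r \<Delta>d \<Delta> n')) \<le> ereal (\<epsilon>0 + \<epsilon>1 * Di powr r)"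
proof -
  let ?ps = "psi_r \<alpha> \<epsilon>0 \<delta>0 \<epsilon>1 \<delta>1 r \<Delta>d \<Delta>"
  have Di: "0 \<le> Di" using a by linarith
  have epos: "0 \<le> \<epsilon>0 + \<epsilon>1 * Di powr r" using pa by (simp add: add_nonneg_nonneg)
  show ?thesis
  proof (cases "n = n'")
    case True
    have "approx_renyi (\<delta>0 + \<delta>1 * Di powr r) \<alpha> (bernoulli_pmf (?ps n)) (bernoulli_pmf (?ps n)) \<le> 0"
      by (rule approx_self)
    moreover have "(0::ereal) \<le> ereal (\<epsilon>0 + \<epsilon>1 * Di powr r)" using epos by simp
    ultimately show ?thesis using True by (meson order_trans)
  next
    case False
    have nn': "n \<le> n'" using nn unfolding n_def n'_def .
    then have lt: "n < n'" using False by simp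
    define k where "k = n' - n"
    have k1: "1 \<le> k" "k \<le> n'" "n' - k = n" using lt unfolding k_def by auto
    have f1: "real n' \<le> a' / \<Delta>d" "a / \<Delta>d < real n + 1"
      using floor_facts[OF a(1) pa(7)] floor_facts[OF a(2) pa(7)] unfolding n_def n'_def by auto
    have "real k = real n' - real n" using lt unfolding k_def by simp
    also have "\<dots> < a' / \<Delta>d - a / \<Delta>d + 1" using f1 by linarith
    also have "a' / \<Delta>d - a / \<Delta>d = (a' - a) / \<Delta>d" by (simp add: diff_divide_distrib)
    also have "\<dots> \<le> Di / \<Delta>d" using a pa by (intro divide_right_mono) auto
    finally have kk: "real k - 1 < Di / \<Delta>d" by simp
    have rk: "real (k - 1) = real k - 1" using k1 by simp
    have kD: "\<Delta>d * real (k - 1) \<le> Di"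
      using kk rk pa by (simp add: field_simps)
    have "real (k - 1) < \<Delta> / \<Delta>d"
      using kk rk a pa by (smt (verit) divide_right_mono)
    then have "int (k - 1) < \<lceil>\<Delta> / \<Delta>d\<rceil>" by (simp add: less_ceiling_iff)
    then have kN: "k \<le> N_disc \<Delta>d \<Delta>" unfolding N_disc_def using k1 by linarith
    have jump: "?ps n' \<le> L_fun \<alpha> (?ps n) (\<epsilon>0 + \<epsilon>1 * (\<Delta>d * real (k - 1)) powr r) (\<delta>0 + \<delta>1 * (\<Delta>d * real (k - 1)) powr r)"
      using ps_jump[OF pa k1(1) kN k1(2)] k1(3) by simp
    have mono: "?ps n \<le> ?ps n'" using ps_mono[OF pa] lt by simp
    have rng: "0 \<le> ?ps n" "?ps n \<le> 1" using ps_range[OF pa] by auto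
    have G: "Gp \<alpha> (?ps n) (\<epsilon>0 + \<epsilon>1 * (\<Delta>d * real (k - 1)) powr r) (\<delta>0 + \<delta>1 * (\<Delta>d * real (k - 1)) powr r) (?ps n')"
      using L_props(3)[OF pa(1) ee_pos[OF pa] dd_pos[OF pa] rng mono jump] .
    have pw: "(\<Delta>d * real (k - 1)) powr r \<le> Di powr r"
      using kD pa by (intro powr_mono2) auto
    have ek: "\<epsilon>0 + \<epsilon>1 * (\<Delta>d * real (k - 1)) powr r \<le> \<epsilon>0 + \<epsilon>1 * Di powr r" using pw pa by simp
    have dk: "\<delta>0 + \<delta>1 * (\<Delta>d * real (k - 1)) powr r \<le> \<delta>0 + \<delta>1 * Di powr r" using pw pa by simp
    have dpos: "0 < \<delta>0 + \<delta>1 * (\<Delta>d * real (k - 1)) powr r" by (rule dd_pos[OF pa])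
    note m1 = approx_mono_dl[OF dpos dk, of \<alpha> "bernoulli_pmf (?ps n')" "bernoulli_pmf (?ps n)"]
    note m2 = approx_mono_dl[OF dpos dk, of \<alpha> "bernoulli_pmf (?ps n)" "bernoulli_pmf (?ps n')"]
    have ek': "ereal (\<epsilon>0 + \<epsilon>1 * (\<Delta>d * real (k - 1)) powr r) \<le> ereal (\<epsilon>0 + \<epsilon>1 * Di powr r)"
      using ek by simp
    show ?thesis using G m1 m2 ek' unfolding Gp_def by (meson order_trans)
  qed
qed

end

lemma mech_mk: "mech \<phi> X = mk (\<lambda>v. bernoulli_pmf (\<phi> (X v)))"
  unfolding mech_def mk_def ..

theorem mainTheorem5:
  fixes \<alpha> \<epsilon>0 \<delta>0 r \<epsilon>1 \<delta>1 \<Delta>d \<Delta> \<Delta>inf :: real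
    and X X' :: "'u::finite \<Rightarrow> real" and u :: 'u
  assumes "\<alpha> > 1" and "\<epsilon>0 > 0" and "\<delta>0 > 0" and "r > 0" and "\<epsilon>1 > 0" and "\<delta>1 > 0"
    and "\<Delta>d > 0" and "\<Delta> > 0"
    and "\<forall>v. X v \<ge> 0" and "\<forall>v. X' v \<ge> 0"
    and "\<forall>v. v \<noteq> u \<longrightarrow> X v = X' v"
    and "\<bar>X u - X' u\<bar> \<le> \<Delta>inf" and "\<Delta>inf \<le> \<Delta>"
    and "\<delta>0 + \<delta>1 * \<Delta>inf powr r < 1"
  shows "max (approx_renyi (\<delta>0 + \<delta>1 * \<Delta>inf powr r) \<alpha>
                 (mech (phi_r \<alpha> \<epsilon>0 \<delta>0 \<epsilon>1 \<delta>1 r \<Delta>d \<Delta>) X) (mech (phi_r \<alpha> \<epsilon>0 \<delta>0 \<epsilon>1 \<delta>1 r \<Delta>d \<Delta>) X'))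
             (approx_renyi (\<delta>0 + \<delta>1 * \<Delta>inf powr r) \<alpha>
                 (mech (phi_r \<alpha> \<epsilon>0 \<delta>0 \<epsilon>1 \<delta>1 r \<Delta>d \<Delta>) X') (mech (phi_r \<alpha> \<epsilon>0 \<delta>0 \<epsilon>1 \<delta>1 r \<Delta>d \<Delta>) X))
         \<le> ereal (\<epsilon>0 + \<epsilon>1 * \<Delta>inf powr r)"
proof -
  note pa = assms(1-8)
  let ?phi = "phi_r \<alpha> \<epsilon>0 \<delta>0 \<epsilon>1 \<delta>1 r \<Delta>d \<Delta>"
  let ?d = "\<delta>0 + \<delta>1 * \<Delta>inf powr r"
  let ?e = "ereal (\<epsilon>0 + \<epsilon>1 * \<Delta>inf powr r)"
  let ?K = "\<lambda>v. bernoulli_pmf (?phi (X v))"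
  let ?K' = "\<lambda>v. bernoulli_pmf (?phi (X' v))"
  have ag: "\<And>v. v \<noteq> u \<Longrightarrow> ?K v = ?K' v" using assms(11) by simp
  have ag': "\<And>v. v \<noteq> u \<Longrightarrow> ?K' v = ?K v" using assms(11) by simp
  have B: "approx_renyi ?d \<alpha> (?K u) (?K' u) \<le> ?e \<and> approx_renyi ?d \<alpha> (?K' u) (?K u) \<le> ?e"
  proof (cases "nat \<lfloor>X u / \<Delta>d\<rfloor> \<le> nat \<lfloor>X' u / \<Delta>d\<rfloor>")
    case True
    then show ?thesis
      using bern_step[OF pa, of "X u" "X' u" \<Delta>inf] assms(9,10,12,13)
      unfolding phi_r_def by auto
  next
    case False
    then show ?thesis
      using bern_step[OF pa, of "X' u" "X u" \<Delta>inf] assms(9,10,12,13)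
      unfolding phi_r_def by (auto simp: abs_minus_commute)
  qed
  have "approx_renyi ?d \<alpha> (mech ?phi X) (mech ?phi X') \<le> ?e"
    unfolding mech_mk using approx_mk[of u ?K ?K' ?d \<alpha>] ag B by (meson order_trans)
  moreover have "approx_renyi ?d \<alpha> (mech ?phi X') (mech ?phi X) \<le> ?e"
    unfolding mech_mk using approx_mk[of u ?K' ?K ?d \<alpha>] ag' B by (meson order_trans)
  ultimately show ?thesis by simp
qed


end
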